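(* For integers $k\geq1$ and $n_1,\dots,n_{k}\geq0$, \[ \sum_{\substack{t_1,\dots,t_k\ge0 \\ t_1=t_k=0}} \prod_{i=1}^{k-1} q^{t_{i+1}(n_{i+1} - t_i + t_{i+1})} \begin{bmatrix} n_i+t_i\\ n_i\end{bmatrix}_q \begin{bmatrix} n_i+n_{i+1}\\ n_i+t_i-t_{i+1}\end{bmatrix}_q = \begin{bmatrix} n_1+\cdots+n_{k}\\ n_1,\dots,n_{k}\end{bmatrix}_q. \]
   Context: $[m]_q=1+q+\dots+q^{m-1}$, $[m]_q!=[1]_q\cdots[m]_q$; $\begin{bmatrix} m\\ j\end{bmatrix}_q=\frac{[m]_q!}{[j]_q![m-j]_q!}$ for $0\le j\le m$ and $0$ otherwise; $\begin{bmatrix} n_1+\cdots+n_k\\ n_1,\dots,n_k\end{bmatrix}_q=\frac{[n_1+\cdots+n_k]_q!}{[n_1]_q!\cdots[n_k]_q!}$. The sum is over integer tuples; an empty product equals $1$. *)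

theory Defs
  imports "HOL-Computational_Algebra.Polynomial" "HOL-Library.Groups_Big_Fun"
begin

text \<open>q-analogues as polynomials in the formal variable q = [:0,1:].\<close>

definition qint :: "nat \<Rightarrow> 'a::field poly" where
  "qint m = (\<Sum>i<m. monom 1 i)"

definition qfact :: "nat \<Rightarrow> 'a::field poly" where
  "qfact m = (\<Prod>i=1..m. qint i)"

definition qbinom :: "int \<Rightarrow> int \<Rightarrow> 'a::field poly" where
  "qbinom m j = (if 0 \<le> j \<and> j \<le> m
     then qfact (nat m) div (qfact (nat j) * qfact (nat (m - j))) else 0)"

definition qmultinom :: "nat \<Rightarrow> (nat \<Rightarrow> nat) \<Rightarrow> 'a::field poly" where
  "qmultinom k n = qfact (\<Sum>i=1..k. n i) div (\<Prod>i=1..k. qfact (n i))"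

end

theory Submission
  imports Defs
begin

lemma qint_alt: "qint m = (\<Sum>i<m. [:0,1:] ^ i)"
  by (simp add: qint_def monom_altdef)

lemma qint_add: "(qint (a + b) :: 'a::field poly) = qint a + [:0,1:]^a * qint b"
  by (induct b) (simp_all add: qint_alt algebra_simps power_add)

lemma qint_Suc_nz: "(qint (Suc m) :: 'a::field poly) \<noteq> 0"
proof
  assume "(qint (Suc m) :: 'a poly) = 0"
  then have "poly (qint (Suc m) :: 'a poly) 0 = 0" by simp
  moreover have "poly (qint (Suc m) :: 'a poly) 0 = 1"
    by (simp add: qint_alt poly_sum lessThan_Suc_eq_insert_0 sum.reindex zero_power)
  ultimately show False by simp
qed

lemma qfact_0[simp]: "qfact 0 = 1" by (simp add: qfact_def)

lemma qfact_Suc: "qfact (Suc m) = qfact m * qint (Suc m)"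
  by (simp add: qfact_def)

lemma qfact_nz: "(qfact m :: 'a::field poly) \<noteq> 0"
  by (induct m) (simp_all add: qfact_Suc qint_Suc_nz)

fun qb :: "nat \<Rightarrow> nat \<Rightarrow> 'a::field poly" where
  "qb m 0 = 1"
| "qb 0 (Suc j) = 0"
| "qb (Suc m) (Suc j) = [:0,1:]^(m-j) * qb m j + qb m (Suc j)"

lemma qb_zero: "m < j \<Longrightarrow> qb m j = 0"
proof (induct m arbitrary: j)
  case 0 then show ?case by (cases j) auto
next
  case (Suc m) then show ?case by (cases j) auto
qed

lemma qb_fact: "j \<le> m \<Longrightarrow> qfact j * qfact (m - j) * qb m j = (qfact m :: 'a::field poly)"
proof (induct m arbitrary: j)
  case 0 then show ?case by simp
next
  case (Suc m j)
  show ?case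
  proof (cases j)
    case 0 then show ?thesis by simp
  next
    case (Suc j')
    with Suc.prems have jm: "j' \<le> m" by simp
    have IH1: "qfact j' * qfact (m - j') * qb m j' = (qfact m :: 'a poly)" using Suc.hyps jm by simp
    show ?thesis
    proof (cases "j' = m")
      case True
      then show ?thesis using IH1 Suc by (simp add: qfact_Suc qb_zero qfact_nz algebra_simps)
    next
      case False
      then have jm2: "Suc j' \<le> m" using jm by simp
      have IH2: "qfact (Suc j') * qfact (m - Suc j') * qb m (Suc j') = (qfact m :: 'a poly)" using Suc.hyps jm2 by simp
      have e: "m - j' = Suc (m - Suc j')" using jm2 by simp
      have qi: "(qint (Suc m) :: 'a poly) = qint (m - j') + [:0,1:]^(m-j') * qint (Suc j')"
        using qint_add[of "m - j'" "Suc j'", where 'a='a] jm by simp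
      have "qfact (Suc j') * qfact (Suc m - Suc j') * (qb (Suc m) (Suc j') :: 'a poly)
          = [:0,1:]^(m-j') * qint (Suc j') * (qfact j' * qfact (m - j') * qb m j')
            + qint (m - j') * (qfact (Suc j') * qfact (m - Suc j') * qb m (Suc j'))"
        by (simp add: e qfact_Suc algebra_simps)
      also have "\<dots> = [:0,1:]^(m-j') * qint (Suc j') * qfact m + qint (m - j') * qfact m"
        using IH1 IH2 by metis
      also have "\<dots> = qfact m * qint (Suc m)" by (simp add: qi algebra_simps)
      finally show ?thesis using Suc by (simp add: qfact_Suc)
    qed
  qed
qed

definition qp :: "int \<Rightarrow> 'a::field poly" where "qp e = [:0,1:] ^ nat e"

lemma qp_add: "0 \<le> a \<Longrightarrow> 0 \<le> b \<Longrightarrow> qp (a + b) = qp a * qp b"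
  by (simp add: qp_def nat_add_distrib power_add)

lemma qp_0[simp]: "qp 0 = 1" by (simp add: qp_def)

lemma qbinom_out: "\<not> (0 \<le> j \<and> j \<le> m) \<Longrightarrow> qbinom m j = 0"
  by (auto simp: qbinom_def)

lemma qbinom_nz: "qbinom m j \<noteq> 0 \<Longrightarrow> 0 \<le> j \<and> j \<le> m"
  using qbinom_out by blast

lemma qbinom_nat: "qbinom (int m) (int j) = (qb m j :: 'a::field poly)"
proof (cases "j \<le> m")
  case True
  have "(qfact m :: 'a poly) = (qfact j * qfact (m - j)) * qb m j" by (rule qb_fact[OF True, symmetric])
  moreover have "qbinom (int m) (int j) = (qfact m div (qfact j * qfact (m - j)) :: 'a poly)"
    using True by (simp add: qbinom_def nat_diff_distrib del: of_nat_diff)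
  ultimately show ?thesis by (simp add: qfact_nz)
next
  case False
  then show ?thesis by (simp add: qbinom_def qb_zero)
qed

lemma qbinom_fact: "0 \<le> j \<Longrightarrow> j \<le> m \<Longrightarrow>
   qfact (nat j) * qfact (nat (m - j)) * qbinom m j = (qfact (nat m) :: 'a::field poly)"
proof -
  assume a: "0 \<le> j" "j \<le> m"
  obtain a b where ab: "j = int b" "m = int a" "b \<le> a" using a
    by (metis nat_0_le order_trans of_nat_le_iff)
  have "qfact b * qfact (a - b) * qb a b = (qfact a :: 'a poly)" by (rule qb_fact[OF ab(3)])
  moreover have "qbinom m j = (qb a b :: 'a poly)" using ab by (simp add: qbinom_nat)
  moreover have "nat j = b" "nat (m - j) = a - b" "nat m = a" using ab by auto
  ultimately show ?thesis by simp
qed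

lemma qbinom_pascal: "0 \<le> m \<Longrightarrow> qbinom (m + 1) (j + 1) = qp (m - j) * qbinom m j + (qbinom m (j + 1) :: 'a::field poly)"
proof -
  assume m: "0 \<le> m"
  then obtain a where a: "m = int a" by (metis nonneg_eq_int)
  consider "j < -1" | "j = -1" | "0 \<le> j" by linarith
  then show ?thesis
  proof cases
    case 1 then show ?thesis by (simp add: qbinom_out)
  next
    case 2 then show ?thesis using m by (simp add: qbinom_def qfact_nz)
  next
    case 3
    then obtain b where b: "j = int b" by (metis nonneg_eq_int)
    have h1: "qbinom (m + 1) (j + 1) = (qb (Suc a) (Suc b) :: 'a poly)"
      using qbinom_nat[of "Suc a" "Suc b", where 'a='a] a b by (simp add: add.commute)
    have h2: "qbinom m j = (qb a b :: 'a poly)" using a b by (simp add: qbinom_nat)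
    have h3: "qbinom m (j + 1) = (qb a (Suc b) :: 'a poly)"
      using qbinom_nat[of a "Suc b", where 'a='a] a b by (simp add: add.commute)
    have "nat (m - j) = a - b" using a b by arith
    then have h4: "qp (m - j) = ([:0,1:] ^ (a - b) :: 'a poly)" by (simp add: qp_def)
    show ?thesis by (simp add: h1 h2 h3 h4)
  qed
qed

lemma qbinom_sym: "0 \<le> m \<Longrightarrow> qbinom m j = (qbinom m (m - j) :: 'a::field poly)"
proof (cases "0 \<le> j \<and> j \<le> m")
  case True
  assume m: "0 \<le> m"
  let ?X = "qfact (nat j) * (qfact (nat (m - j)) :: 'a poly)"
  have h1: "?X * qbinom m j = qfact (nat m)"
    using True qbinom_fact[of j m, where 'a='a] by simp
  have h2: "qfact (nat (m - j)) * qfact (nat (m - (m - j))) * qbinom m (m - j) = (qfact (nat m) :: 'a poly)"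
    using True by (intro qbinom_fact) auto
  have h3: "?X * qbinom m (m - j) = qfact (nat m)"
    using h2 by (simp add: ac_simps)
  have "?X \<noteq> 0" by (simp add: qfact_nz)
  with h1 h3 show ?thesis by (metis mult_left_cancel)
next
  case False
  then have "\<not> (0 \<le> m - j \<and> m - j \<le> m)" by auto
  then show ?thesis using False by (simp add: qbinom_out)
qed

lemma qbinom_trinom:
  assumes "0 \<le> c" "0 \<le> s" "c \<le> N"
  shows "qbinom N (c + s) * qbinom (c + s) c = qbinom N c * (qbinom (N - c) s :: 'a::field poly)"
proof (cases "c + s \<le> N")
  case False then show ?thesis by (simp add: qbinom_out)
next
  case True
  define D where "D = qfact (nat c) * qfact (nat s) * (qfact (nat (N - (c + s))) :: 'a poly)"
  define A where "A = (qbinom N (c + s) :: 'a poly)"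
  define B where "B = (qbinom (c + s) c :: 'a poly)"
  define C where "C = (qbinom N c :: 'a poly)"
  define E where "E = (qbinom (N - c) s :: 'a poly)"
  have e1: "qfact (nat (c + s)) * qfact (nat (N - (c + s))) * A = (qfact (nat N) :: 'a poly)"
    unfolding A_def using True assms by (intro qbinom_fact) auto
  have e2: "qfact (nat c) * qfact (nat (c + s - c)) * B = (qfact (nat (c + s)) :: 'a poly)"
    unfolding B_def using assms by (intro qbinom_fact) auto
  have e3: "qfact (nat c) * qfact (nat (N - c)) * C = (qfact (nat N) :: 'a poly)"
    unfolding C_def using assms by (intro qbinom_fact) auto
  have e4: "qfact (nat s) * qfact (nat (N - c - s)) * E = (qfact (nat (N - c)) :: 'a poly)"
    unfolding E_def using assms True by (intro qbinom_fact) auto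
  have e2': "qfact (nat c) * qfact (nat s) * B = qfact (nat (c + s))" using e2 by simp
  have e4': "qfact (nat s) * qfact (nat (N - (c + s))) * E = qfact (nat (N - c))"
    using e4 by (simp add: diff_diff_eq)
  have "D * (A * B) = (qfact (nat c) * qfact (nat s) * B) * qfact (nat (N - (c + s))) * A"
    unfolding D_def by (simp only: ac_simps)
  also have "\<dots> = qfact (nat (c + s)) * qfact (nat (N - (c + s))) * A" by (simp only: e2')
  also have "\<dots> = qfact (nat N)" by (rule e1)
  finally have l: "D * (A * B) = qfact (nat N)" .
  have "D * (C * E) = (qfact (nat s) * qfact (nat (N - (c + s))) * E) * qfact (nat c) * C"
    unfolding D_def by (simp only: ac_simps)
  also have "\<dots> = qfact (nat (N - c)) * qfact (nat c) * C" by (simp only: e4')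
  also have "\<dots> = qfact (nat N)" using e3 by (simp only: ac_simps)
  finally have r: "D * (C * E) = qfact (nat N)" .
  have "D \<noteq> 0" unfolding D_def by (simp add: qfact_nz)
  with l r have "A * B = C * E" by (metis mult_left_cancel)
  then show ?thesis unfolding A_def B_def C_def E_def .
qed

lemma qbinom_0_left: "qbinom 0 s = (if s = 0 then 1 else 0)"
  by (simp add: qbinom_def)

lemma qbinom_diag: "0 \<le> m \<Longrightarrow> qbinom m m = 1"
  by (simp add: qbinom_def qfact_nz)

lemma sum_supp_int:
  fixes g :: "int \<Rightarrow> 'b::comm_monoid_add"
  assumes "finite S" "{0..L} \<subseteq> S" "\<And>u. u \<in> S \<Longrightarrow> u \<notin> {0..L} \<Longrightarrow> g u = 0"
  shows "sum g S = sum g {0..L}"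
  using assms by (intro sum.mono_neutral_right) auto

lemma sum_shift_int:
  fixes g :: "int \<Rightarrow> 'b::comm_monoid_add"
  shows "sum (\<lambda>s. g (s - 1)) {0..M} = sum g {-1..M-1}"
  by (rule sum.reindex_bij_witness[of _ "\<lambda>u. u + 1" "\<lambda>s. s - 1"]) auto

lemma qp_mult_eq:
  assumes "0 \<le> x" "0 \<le> y" "0 \<le> z" "0 \<le> w" "x + y = z + w"
  shows "qp x * qp y = qp z * qp w"
  using assms by (metis qp_add)

lemma qvander:
  fixes B M :: int
  assumes "0 \<le> B" "int a \<le> M"
  shows "(\<Sum>s\<in>{0..M}. qp (s * (B - r + s)) * qbinom (int a) s * qbinom B (r - s)) = (qbinom (int a + B) r :: 'a::field poly)"
  using assms(2)
proof (induct a arbitrary: r)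
  case 0
  have "(\<Sum>s\<in>{0..M}. qp (s * (B - r + s)) * qbinom (int 0) s * qbinom B (r - s))
      = (\<Sum>s\<in>{0..M}. if s = 0 then (qbinom B r :: 'a poly) else 0)"
    by (rule sum.cong) (auto simp: qbinom_0_left)
  also have "\<dots> = qbinom B r" using 0 by simp
  finally show ?case by simp
next
  case (Suc a)
  have M: "int a \<le> M" "int a < M" using Suc.prems by auto
  define g where "g = (\<lambda>u. qp (u * (B - (r - 1) + u)) * qbinom (int a) u * (qbinom B (r - 1 - u) :: 'a poly))"
  have pas: "qbinom (int (Suc a)) s = qp (int a - (s - 1)) * qbinom (int a) (s - 1) + (qbinom (int a) s :: 'a poly)" for s
    using qbinom_pascal[of "int a" "s - 1", where 'a='a] by (simp add: add.commute)
  have trm: "qp (s * (B - r + s)) * (qp (int a - (s - 1)) * qbinom (int a) (s - 1)) * qbinom B (r - s)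
      = qp (int a + B + 1 - r) * g (s - 1)" for s
  proof (cases "(qbinom (int a) (s - 1) :: 'a poly) = 0 \<or> qbinom B (r - s) = (0 :: 'a poly)")
    case True
    have e: "r - 1 - (s - 1) = r - s" by simp
    from True show ?thesis unfolding g_def by (elim disjE) (simp_all add: e)
  next
    case False
    then have b: "0 \<le> s - 1" "s - 1 \<le> int a" "0 \<le> r - s" "r - s \<le> B"
      by (auto dest!: qbinom_nz)
    have "qp (s * (B - r + s)) * qp (int a - (s - 1)) = qp (int a + B + 1 - r) * (qp ((s - 1) * (B - (r - 1) + (s - 1))) :: 'a poly)"
    proof (rule qp_mult_eq)
      show "0 \<le> s * (B - r + s)" using b by (intro mult_nonneg_nonneg) auto
      show "0 \<le> (s - 1) * (B - (r - 1) + (s - 1))" using b by (intro mult_nonneg_nonneg) auto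
    qed (use b in \<open>auto simp: algebra_simps\<close>)
    moreover have "r - 1 - (s - 1) = r - s" by simp
    ultimately show ?thesis unfolding g_def by (simp add: ac_simps)
  qed
  have S1: "(\<Sum>s\<in>{0..M}. qp (int a + B + 1 - r) * g (s - 1)) = qp (int a + B + 1 - r) * qbinom (int a + B) (r - 1)"
  proof -
    have "(\<Sum>s\<in>{0..M}. g (s - 1)) = sum g {-1..M-1}" by (rule sum_shift_int)
    also have "\<dots> = sum g {0..int a}"
      using M by (intro sum_supp_int) (auto simp: g_def qbinom_out)
    also have "\<dots> = sum g {0..M}"
      using M by (intro sum_supp_int[symmetric]) (auto simp: g_def qbinom_out)
    also have "\<dots> = qbinom (int a + B) (r - 1)"
      unfolding g_def by (rule Suc.hyps) (use M in auto)
    finally show ?thesis by (simp only: sum_distrib_left[symmetric])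
  qed
  have "(\<Sum>s\<in>{0..M}. qp (s * (B - r + s)) * qbinom (int (Suc a)) s * qbinom B (r - s))
     = (\<Sum>s\<in>{0..M}. qp (int a + B + 1 - r) * g (s - 1))
       + (\<Sum>s\<in>{0..M}. qp (s * (B - r + s)) * qbinom (int a) s * (qbinom B (r - s) :: 'a poly))"
    unfolding sum.distrib[symmetric] by (rule sum.cong) (rule refl, simp only: pas distrib_left distrib_right trm[symmetric])
  also have "\<dots> = qp (int a + B + 1 - r) * qbinom (int a + B) (r - 1) + qbinom (int a + B) r"
    using S1 Suc.hyps M by simp
  also have "\<dots> = qbinom (int a + B + 1) r"
    using qbinom_pascal[of "int a + B" "r - 1", where 'a='a] assms(1) by (simp add: algebra_simps)
  finally show ?case by (simp add: algebra_simps)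
qed

lemma qmultinom_step0:
  assumes A: "(\<Prod>i=1..j. qfact (n i)) * qmultinom j n = (qfact (sum n {1..j}) :: 'a::field poly)"
  shows "qfact (sum n {1..Suc j}) = (\<Prod>i=1..Suc j. qfact (n i)) * (qmultinom j n * (qb (sum n {1..Suc j}) (n (Suc j)) :: 'a poly))"
proof -
  let ?P = "(\<Prod>i=1..j. qfact (n i)) :: 'a poly"
  have S: "sum n {1..Suc j} = sum n {1..j} + n (Suc j)" by simp
  have h: "sum n {1..Suc j} - n (Suc j) = sum n {1..j}" by simp
  have "qfact (n (Suc j)) * qfact (sum n {1..Suc j} - n (Suc j)) * qb (sum n {1..Suc j}) (n (Suc j))
        = (qfact (sum n {1..Suc j}) :: 'a poly)"
    by (rule qb_fact) (simp add: S)
  then have "qfact (n (Suc j)) * (?P * qmultinom j n) * qb (sum n {1..Suc j}) (n (Suc j))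
        = (qfact (sum n {1..Suc j}) :: 'a poly)"
    unfolding h A .
  moreover have "qfact (n (Suc j)) * (?P * qmultinom j n) * qb (sum n {1..Suc j}) (n (Suc j))
     = (\<Prod>i=1..Suc j. qfact (n i)) * (qmultinom j n * (qb (sum n {1..Suc j}) (n (Suc j)) :: 'a poly))"
    by (simp add: ac_simps)
  ultimately show ?thesis by simp
qed

lemma qmultinom_step:
  assumes A: "(\<Prod>i=1..j. qfact (n i)) * qmultinom j n = (qfact (sum n {1..j}) :: 'a::field poly)"
  shows "qmultinom (Suc j) n = qmultinom j n * (qb (sum n {1..Suc j}) (n (Suc j)) :: 'a poly)"
proof -
  have nz: "(\<Prod>i=1..Suc j. qfact (n i)) \<noteq> (0 :: 'a poly)" by (simp add: qfact_nz)
  show ?thesis unfolding qmultinom_def[of "Suc j"] qmultinom_step0[OF A] using nz by simp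
qed

lemma qmultinom_exact: "(\<Prod>i=1..j. qfact (n i)) * qmultinom j n = (qfact (sum n {1..j}) :: 'a::field poly)"
proof (induct j)
  case 0 then show ?case by (simp add: qmultinom_def)
next
  case (Suc j)
  show ?case unfolding qmultinom_step[OF Suc] qmultinom_step0[OF Suc] ..
qed

lemma qmultinom_Suc: "qmultinom (Suc j) n = qmultinom j n * (qbinom (int (sum n {1..Suc j})) (int (n (Suc j))) :: 'a::field poly)"
  by (simp only: qmultinom_step[OF qmultinom_exact] qbinom_nat)

lemma termwise:
  fixes N c d s s' :: int and K :: "'a::field poly"
  assumes "0 \<le> c" "c \<le> N" "0 \<le> d" "0 \<le> s" "0 \<le> s'"
  shows "qp (s * (c + s)) * qbinom N (c + s) * K *
     ([:0,1:] ^ nat (s' * (d - s + s')) * qbinom (c + s) c * qbinom (c + d) (c + s - s'))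
   = (K * qbinom N c * qp (s' * (d + s'))) * (qp (s * ((c + d) - (d + s') + s)) * qbinom (N - c) s * qbinom (c + d) ((d + s') - s))"
proof -
  have tri: "qbinom N (c + s) * qbinom (c + s) c = qbinom N c * (qbinom (N - c) s :: 'a poly)"
    using assms by (intro qbinom_trinom) auto
  have sy: "qbinom (c + d) (c + s - s') = (qbinom (c + d) ((d + s') - s) :: 'a poly)"
    using qbinom_sym[of "c + d" "c + s - s'", where 'a='a] assms by (simp add: algebra_simps)
  have ex: "qp (s * (c + s)) * ([:0,1:] ^ nat (s' * (d - s + s')) :: 'a poly)
      = qp (s' * (d + s')) * qp (s * ((c + d) - (d + s') + s))"
    if nz: "qbinom (c + d) ((d + s') - s) \<noteq> (0 :: 'a poly)"
  proof -
    from qbinom_nz[OF nz] have b: "0 \<le> d + s' - s" "d + s' - s \<le> c + d" by auto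
    have "qp (s * (c + s)) * (qp (s' * (d - s + s')) :: 'a poly) = qp (s' * (d + s')) * qp (s * ((c + d) - (d + s') + s))"
    proof (rule qp_mult_eq)
      show "0 \<le> s * (c + s)" using assms by simp
      show "0 \<le> s' * (d - s + s')" using assms b by (intro mult_nonneg_nonneg) auto
      show "0 \<le> s' * (d + s')" using assms by simp
      show "0 \<le> s * ((c + d) - (d + s') + s)" using assms b by (intro mult_nonneg_nonneg) auto
    qed (simp add: algebra_simps)
    then show ?thesis by (simp add: qp_def)
  qed
  show ?thesis
  proof (cases "qbinom (c + d) ((d + s') - s) = (0 :: 'a poly)")
    case True then show ?thesis by (simp add: sy)
  next
    case False
    have "qp (s * (c + s)) * qbinom N (c + s) * K *
       ([:0,1:] ^ nat (s' * (d - s + s')) * qbinom (c + s) c * qbinom (c + d) (c + s - s'))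
      = (qp (s * (c + s)) * ([:0,1:] ^ nat (s' * (d - s + s')) :: 'a poly)) * (qbinom N (c + s) * qbinom (c + s) c) * K * qbinom (c + d) (c + s - s')"
      by (simp only: ac_simps)
    also have "\<dots> = (qp (s' * (d + s')) * qp (s * ((c + d) - (d + s') + s))) * (qbinom N c * qbinom (N - c) s) * K * qbinom (c + d) ((d + s') - s)"
      by (simp only: ex[OF False] tri sy)
    also have "\<dots> = (K * qbinom N c * qp (s' * (d + s'))) * (qp (s * ((c + d) - (d + s') + s)) * qbinom (N - c) s * qbinom (c + d) ((d + s') - s))"
      by (simp only: ac_simps)
    finally show ?thesis .
  qed
qed

definition tm :: "(nat \<Rightarrow> nat) \<Rightarrow> nat \<Rightarrow> int \<Rightarrow> int \<Rightarrow> 'a::field poly" where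
  "tm n i a b = [:0, 1:] ^ nat (b * (int (n (i+1)) - a + b))
                   * qbinom (int (n i) + a) (int (n i))
                   * qbinom (int (n i) + int (n (i+1))) (int (n i) + a - b)"

definition TT :: "nat \<Rightarrow> int \<Rightarrow> (nat \<Rightarrow> int) set" where
  "TT k M = {t. \<forall>x. (x \<in> {1..k} \<longrightarrow> t x \<in> {0..M}) \<and> (x \<notin> {1..k} \<longrightarrow> t x = 0)}"

definition GG :: "(nat \<Rightarrow> nat) \<Rightarrow> nat \<Rightarrow> int \<Rightarrow> int \<Rightarrow> 'a::field poly" where
  "GG n k M s = (\<Sum>t\<in>TT k M. if t 1 = 0 \<and> t k = s then \<Prod>i=1..k-1. tm n i (t i) (t (i+1)) else 0)"

lemma finite_TT: "finite (TT k M)"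
  unfolding TT_def by (rule finite_set_of_finite_funs) auto

lemma GG_rec:
  assumes k: "1 \<le> k" and s': "0 \<le> s'" "s' \<le> M"
  shows "GG n (Suc k) M s' = (\<Sum>s\<in>{0..M}. GG n k M s * (tm n k s s' :: 'a::field poly))"
proof -
  define P where "P t = (\<Prod>i=1..k-1. tm n i (t i) (t (i+1)) :: 'a poly)" for t
  have L: "GG n (Suc k) M s' = (\<Sum>(t, b)\<in>TT k M \<times> {0..M}.
      if t 1 = 0 \<and> b = s' then P t * tm n k (t k) b else (0 :: 'a poly))"
    unfolding GG_def
  proof (rule sum.reindex_bij_witness[of _ "\<lambda>(t, b). t(Suc k := b)" "\<lambda>t. (t(Suc k := 0), t (Suc k))"])
    fix t assume t: "t \<in> TT (Suc k) M"
    show "(case (t(Suc k := 0), t (Suc k)) of (t, b) \<Rightarrow> t(Suc k := b)) = t" by simp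
    show "(t(Suc k := 0), t (Suc k)) \<in> TT k M \<times> {0..M}"
      using t unfolding TT_def by (auto simp: le_Suc_eq)
    have "(\<Prod>i=1..Suc k - 1. tm n i (t i) (t (i+1))) = P t * (tm n k (t k) (t (Suc k)) :: 'a poly)"
    proof -
      have "(\<Prod>i=1..Suc k - 1. tm n i (t i) (t (i+1))) = (\<Prod>i=1..Suc (k - 1). tm n i (t i) (t (i+1)) :: 'a poly)"
        using k by simp
      also have "\<dots> = (\<Prod>i=1..k - 1. tm n i (t i) (t (i+1))) * tm n (Suc (k - 1)) (t (Suc (k-1))) (t (Suc (k-1) + 1))"
        by (simp add: prod.cl_ivl_Suc)
      finally show ?thesis using k unfolding P_def by simp
    qed
    moreover have "P (t(Suc k := 0)) = P t" unfolding P_def by (rule prod.cong) auto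
    ultimately show "(case (t(Suc k := 0), t (Suc k)) of (t, b) \<Rightarrow>
          if t 1 = 0 \<and> b = s' then P t * tm n k (t k) b else 0) =
         (if t 1 = 0 \<and> t (Suc k) = s' then \<Prod>i = 1..Suc k - 1. tm n i (t i) (t (i + 1)) else 0)"
      using k by auto
  next
    fix p assume p: "p \<in> TT k M \<times> {0..M}"
    obtain t b where tb: "p = (t, b)" by (cases p)
    with p have t: "t \<in> TT k M" "b \<in> {0..M}" by auto
    then have "t (Suc k) = 0" unfolding TT_def by auto
    then have "t(Suc k := 0) = t" by auto
    then show "((case p of (t, b) \<Rightarrow> t(Suc k := b))(Suc k := 0), (case p of (t, b) \<Rightarrow> t(Suc k := b)) (Suc k)) = p"
      using tb by simp
    show "(case p of (t, b) \<Rightarrow> t(Suc k := b)) \<in> TT (Suc k) M"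
      using t tb unfolding TT_def by (auto simp: le_Suc_eq)
  qed
  also have "\<dots> = (\<Sum>t\<in>TT k M. \<Sum>b\<in>{0..M}. if t 1 = 0 \<and> b = s' then P t * tm n k (t k) b else (0 :: 'a poly))"
    by (simp add: sum.cartesian_product)
  also have "\<dots> = (\<Sum>t\<in>TT k M. if t 1 = 0 then P t * tm n k (t k) s' else 0)"
  proof (rule sum.cong)
    fix t
    have "(\<Sum>b\<in>{0..M}. if t 1 = 0 \<and> b = s' then P t * tm n k (t k) b else (0 :: 'a poly))
      = (\<Sum>b\<in>{0..M}. if b = s' then (if t 1 = 0 then P t * tm n k (t k) b else 0) else 0)"
      by (rule sum.cong) auto
    also have "\<dots> = (if t 1 = 0 then P t * tm n k (t k) s' else 0)"
      using s' by (simp add: sum.delta)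
    finally show "(\<Sum>b\<in>{0..M}. if t 1 = 0 \<and> b = s' then P t * tm n k (t k) b else (0 :: 'a poly))
      = (if t 1 = 0 then P t * tm n k (t k) s' else 0)" .
  qed simp
  also have "\<dots> = (\<Sum>t\<in>TT k M. \<Sum>s\<in>{0..M}. if t 1 = 0 \<and> t k = s then P t * tm n k s s' else 0)"
  proof (rule sum.cong)
    fix t assume t: "t \<in> TT k M"
    then have tk: "t k \<in> {0..M}" using k unfolding TT_def by auto
    have "(\<Sum>s\<in>{0..M}. if t 1 = 0 \<and> t k = s then P t * tm n k s s' else (0 :: 'a poly))
      = (\<Sum>s\<in>{0..M}. if t k = s then (if t 1 = 0 then P t * tm n k s s' else 0) else 0)"
      by (rule sum.cong) auto
    also have "\<dots> = (if t 1 = 0 then P t * tm n k (t k) s' else 0)"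
      using tk by (simp add: sum.delta')
    finally show "(if t 1 = 0 then P t * tm n k (t k) s' else 0) =
      (\<Sum>s\<in>{0..M}. if t 1 = 0 \<and> t k = s then P t * tm n k s s' else (0 :: 'a poly))" by simp
  qed simp
  also have "\<dots> = (\<Sum>s\<in>{0..M}. GG n k M s * tm n k s s')"
    unfolding GG_def P_def sum_distrib_right
    by (subst sum.swap) (rule sum.cong, simp, rule sum.cong, auto)
  finally show ?thesis .
qed

lemma GG_closed:
  assumes "1 \<le> k"
  shows "int (sum n {1..k}) \<le> M \<Longrightarrow> 0 \<le> s \<Longrightarrow> s \<le> M \<Longrightarrow>
    GG n k M s = qp (s * (int (n k) + s)) * qbinom (int (sum n {1..k})) (int (n k) + s) * (qmultinom (k - 1) n :: 'a::field poly)"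
  using assms
proof (induct k arbitrary: s rule: nat_induct_at_least)
  case base
  have z: "(\<lambda>_. 0 :: int) \<in> TT 1 M" using base unfolding TT_def by auto
  have "GG n 1 M s = (\<Sum>t\<in>TT 1 M. if t = (\<lambda>_. 0) then (if s = 0 then 1 else 0) else (0 :: 'a poly))"
    unfolding GG_def
  proof (rule sum.cong)
    fix t assume t: "t \<in> TT 1 M"
    have "t 1 = 0 \<longleftrightarrow> t = (\<lambda>_. 0)"
    proof
      assume "t 1 = 0"
      then show "t = (\<lambda>_. 0)" using t unfolding TT_def by (auto intro!: ext)
    qed simp
    then show "(if t 1 = 0 \<and> t 1 = s then \<Prod>i = 1..1 - 1. tm n i (t i) (t (i + 1)) else 0) =
          (if t = (\<lambda>_. 0) then (if s = 0 then 1 else 0) else (0 :: 'a poly))"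
      by auto
  qed simp
  also have "\<dots> = (if s = 0 then 1 else 0)" using z by (simp add: sum.delta finite_TT)
  also have "\<dots> = qp (s * (int (n 1) + s)) * qbinom (int (sum n {1..1})) (int (n 1) + s) * (qmultinom (1 - 1) n :: 'a poly)"
    using base by (auto simp: qmultinom_def qbinom_diag qbinom_out)
  finally show ?case .
next
  case (Suc k s')
  let ?c = "int (n k)" and ?d = "int (n (Suc k))" and ?N = "int (sum n {1..k})"
  let ?K = "qmultinom (k - 1) n :: 'a poly"
  have NM: "?N \<le> M" using Suc.prems by simp
  have nk: "n k \<le> sum n {1..k}" by (rule member_le_sum) (use Suc.hyps(1) in auto)
  then have cN: "?c \<le> ?N" by (simp only: of_nat_le_iff)
  have "GG n (Suc k) M s' = (\<Sum>s\<in>{0..M}. GG n k M s * (tm n k s s' :: 'a poly))"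
    using Suc by (intro GG_rec) auto
  also have "\<dots> = (\<Sum>s\<in>{0..M}. (?K * qbinom ?N ?c * qp (s' * (?d + s'))) *
      (qp (s * ((?c + ?d) - (?d + s') + s)) * qbinom (?N - ?c) s * qbinom (?c + ?d) ((?d + s') - s)))"
  proof (rule sum.cong)
    fix s assume s: "s \<in> {0..M}"
    have "GG n k M s * (tm n k s s' :: 'a poly) = qp (s * (?c + s)) * qbinom ?N (?c + s) * ?K * tm n k s s'"
      using Suc.hyps(2)[OF NM] s by simp
    also have "\<dots> = (?K * qbinom ?N ?c * qp (s' * (?d + s'))) *
      (qp (s * ((?c + ?d) - (?d + s') + s)) * qbinom (?N - ?c) s * qbinom (?c + ?d) ((?d + s') - s))"
      unfolding tm_def using termwise[of ?c ?N ?d s s' ?K] cN s Suc.prems by simp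
    finally show "GG n k M s * (tm n k s s' :: 'a poly) = (?K * qbinom ?N ?c * qp (s' * (?d + s'))) *
      (qp (s * ((?c + ?d) - (?d + s') + s)) * qbinom (?N - ?c) s * qbinom (?c + ?d) ((?d + s') - s))" .
  qed simp
  also have "\<dots> = (?K * qbinom ?N ?c * qp (s' * (?d + s'))) * qbinom ((?N - ?c) + (?c + ?d)) (?d + s')"
  proof -
    have a: "int (sum n {1..k} - n k) = ?N - ?c" by (rule of_nat_diff[OF nk])
    have "(\<Sum>s\<in>{0..M}. qp (s * ((?c + ?d) - (?d + s') + s)) * qbinom (int (sum n {1..k} - n k)) s * qbinom (?c + ?d) ((?d + s') - s))
       = (qbinom (int (sum n {1..k} - n k) + (?c + ?d)) (?d + s') :: 'a poly)"
      using NM cN by (intro qvander) (auto simp only: a)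
    then have h: "(\<Sum>s\<in>{0..M}. qp (s * ((?c + ?d) - (?d + s') + s)) * qbinom (?N - ?c) s * qbinom (?c + ?d) ((?d + s') - s))
       = (qbinom ((?N - ?c) + (?c + ?d)) (?d + s') :: 'a poly)" unfolding a .
    show ?thesis unfolding sum_distrib_left[symmetric] h ..
  qed
  also have "\<dots> = qp (s' * (int (n (Suc k)) + s')) * qbinom (int (sum n {1..Suc k})) (int (n (Suc k)) + s') * (qmultinom (Suc k - 1) n :: 'a poly)"
  proof -
    have k: "k = Suc (k - 1)" using Suc.hyps(1) by simp
    have m: "qmultinom k n = ?K * (qbinom ?N ?c :: 'a poly)"
      using qmultinom_Suc[of "k - 1" n, where 'a='a] k by simp
    have "(?N - ?c) + (?c + ?d) = int (sum n {1..Suc k})" by simp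
    then show ?thesis using m by (simp add: ac_simps)
  qed
  finally show ?case .
qed

theorem lemma4p2:
  fixes k :: nat and n :: "nat \<Rightarrow> nat"
  assumes "k \<ge> 1"
  shows "Sum_any (\<lambda>t :: nat \<Rightarrow> int.
           if (\<forall>i\<in>{1..k}. t i \<ge> 0) \<and> t 1 = 0 \<and> t k = 0 \<and> (\<forall>i. i \<notin> {1..k} \<longrightarrow> t i = 0)
           then (\<Prod>i=1..k-1.
                   [:0, 1:] ^ nat (t (i+1) * (int (n (i+1)) - t i + t (i+1)))
                   * qbinom (int (n i) + t i) (int (n i))
                   * qbinom (int (n i) + int (n (i+1))) (int (n i) + t i - t (i+1)))
           else 0)
         = (qmultinom k n :: 'a::field_char_0 poly)"
proof -
  define M where "M = int (sum n {1..k})"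
  define F where "F = (\<lambda>t :: nat \<Rightarrow> int.
           if (\<forall>i\<in>{1..k}. t i \<ge> 0) \<and> t 1 = 0 \<and> t k = 0 \<and> (\<forall>i. i \<notin> {1..k} \<longrightarrow> t i = 0)
           then (\<Prod>i=1..k-1. tm n i (t i) (t (i+1))) else (0 :: 'a poly))"
  have F_eq: "F = (\<lambda>t :: nat \<Rightarrow> int.
           if (\<forall>i\<in>{1..k}. t i \<ge> 0) \<and> t 1 = 0 \<and> t k = 0 \<and> (\<forall>i. i \<notin> {1..k} \<longrightarrow> t i = 0)
           then (\<Prod>i=1..k-1.
                   [:0, 1:] ^ nat (t (i+1) * (int (n (i+1)) - t i + t (i+1)))
                   * qbinom (int (n i) + t i) (int (n i))
                   * qbinom (int (n i) + int (n (i+1))) (int (n i) + t i - t (i+1)))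
           else 0)"
    unfolding F_def tm_def ..
  have sub: "{t. F t \<noteq> 0} \<subseteq> TT k M"
  proof
    fix t assume "t \<in> {t. F t \<noteq> 0}"
    then have c: "\<forall>i\<in>{1..k}. t i \<ge> 0" "t 1 = 0" "\<forall>i. i \<notin> {1..k} \<longrightarrow> t i = 0"
      and p: "(\<Prod>i=1..k-1. tm n i (t i) (t (i+1))) \<noteq> (0 :: 'a poly)"
      unfolding F_def by (auto split: if_splits)
    have step: "t (Suc i) \<le> t i + int (n i)" if "1 \<le> i" "i \<le> k - 1" for i
    proof -
      have "tm n i (t i) (t (i+1)) \<noteq> (0 :: 'a poly)" using p that by auto
      then have "qbinom (int (n i) + int (n (i+1))) (int (n i) + t i - t (i+1)) \<noteq> (0 :: 'a poly)"
        unfolding tm_def by auto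
      from qbinom_nz[OF this] show ?thesis by simp
    qed
    have bnd: "1 \<le> i \<longrightarrow> i \<le> k \<longrightarrow> t i \<le> int (sum n {1..i - 1})" for i
    proof (induct i)
      case 0 then show ?case by simp
    next
      case (Suc i)
      show ?case
      proof (cases "i = 0")
        case True then show ?thesis using c by simp
      next
        case False
        show ?thesis
        proof (intro impI)
          assume "1 \<le> Suc i" "Suc i \<le> k"
          then have "t (Suc i) \<le> t i + int (n i)" "t i \<le> int (sum n {1..i - 1})"
            using step[of i] Suc False by auto
          moreover have "sum n {1..Suc i - 1} = sum n {1..i - 1} + n i"
            using False by (cases i) auto
          ultimately show "t (Suc i) \<le> int (sum n {1..Suc i - 1})" by simp
        qed
      qed
    qed
    have "t i \<in> {0..M}" if "i \<in> {1..k}" for i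
    proof -
      have "sum n {1..i - 1} \<le> sum n {1..k}" using that by (intro sum_mono2) auto
      then show ?thesis using bnd[of i] c that unfolding M_def by (auto simp del: of_nat_sum)
    qed
    then show "t \<in> TT k M" using c unfolding TT_def by auto
  qed
  have "Sum_any F = sum F (TT k M)"
    by (rule Sum_any.expand_superset[OF finite_TT sub])
  also have "\<dots> = GG n k M 0"
    unfolding GG_def F_def by (rule sum.cong) (auto simp: TT_def)
  also have "\<dots> = qbinom M (int (n k)) * qmultinom (k - 1) n"
    using GG_closed[of k n M 0, where 'a='a] assms unfolding M_def by (simp add: sum_nonneg)
  also have "\<dots> = qmultinom k n"
  proof -
    have k: "k = Suc (k - 1)" using assms by simp
    show ?thesis using qmultinom_Suc[of "k - 1" n, where 'a='a] k unfolding M_def by (simp add: ac_simps)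
  qed
  finally show ?thesis unfolding F_eq .
qed

end
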